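(* Let $\pi_+\in(0,1)$, $\pi_-=1-\pi_+$, $p_+,p_-$ probability densities on $\mathcal{X}$, $\ell:\mathbb{R}\times\{+1,-1\}\to\mathbb{R}_+$ a loss and $f:\mathcal{X}\to\mathbb{R}$. Let $$\widetilde{p}_+(\boldsymbol{x})=\frac{\pi_+p_+(\boldsymbol{x})+\pi_-^2p_-(\boldsymbol{x})}{\pi_-^2+\pi_+},\qquad \widetilde{p}_-(\boldsymbol{x})=\frac{\pi_+^2p_+(\boldsymbol{x})+\pi_-p_-(\boldsymbol{x})}{\pi_+^2+\pi_-}.$$ For densities $p_{\mathrm{tr}},p_{\mathrm{tr}'}$ and numbers $\theta\ne\theta'$ define $$R_{\mathrm{UU}}(f)=\mathbb{E}_{p_{\mathrm{tr}}(\boldsymbol{x})}\Big[\frac{(1-\theta')\pi_+}{\theta-\theta'}\ell(f(\boldsymbol{x}),+1)-\frac{\theta'(1-\pi_+)}{\theta-\theta'}\ell(f(\boldsymbol{x}),-1)\Big]+\mathbb{E}_{p_{\mathrm{tr}'}(\boldsymbol{x}')}\Big[\frac{\theta(1-\pi_+)}{\theta-\theta'}\ell(f(\boldsymbol{x}'),-1)-\frac{(1-\theta)\pi_+}{\theta-\theta'}\ell(f(\boldsymbol{x}'),+1)\Big].$$ If $p_{\mathrm{tr}}=\widetilde{p}_+$, $p_{\mathrm{tr}'}=\widetilde{p}_-$, $\theta=\pi_+/(1-\pi_++\pi_+^2)$ and $\theta'=\pi_+^2/(1-\pi_++\pi_+^2)$, then $R_{\mathrm{UU}}(f)=R_{\mathrm{PC}}(f)$,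 where $$R_{\mathrm{PC}}(f)=\mathbb{E}_{\widetilde{p}_+(\boldsymbol{x})}\big[\ell(f(\boldsymbol{x}),+1)-\pi_+\ell(f(\boldsymbol{x}),-1)\big]+\mathbb{E}_{\widetilde{p}_-(\boldsymbol{x}')}\big[\ell(f(\boldsymbol{x}'),-1)-\pi_-\ell(f(\boldsymbol{x}'),+1)\big].$$
   Context: $R_{\mathrm{UU}}$ is the unbiased risk estimator for learning from two unlabeled datasets with class priors $\theta,\theta'$ and marginal densities $p_{\mathrm{tr}},p_{\mathrm{tr}'}$; $\widetilde{p}_\pm$ are the marginals of the two components of pairwise comparison data in a binary problem with class priors $\pi_\pm$ and class-conditional densities $p_\pm$. *)

theory Defs
  imports "HOL-Analysis.Analysis"
begin

definition is_density :: "'a measure \<Rightarrow> ('a \<Rightarrow> real) \<Rightarrow> bool" where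
  "is_density M p \<longleftrightarrow> p \<in> borel_measurable M \<and> (\<forall>x\<in>space M. 0 \<le> p x)
     \<and> integrable M p \<and> (\<integral>x. p x \<partial>M) = 1"

definition expect :: "'a measure \<Rightarrow> ('a \<Rightarrow> real) \<Rightarrow> ('a \<Rightarrow> real) \<Rightarrow> real" where
  "expect M p g = (\<integral>x. p x * g x \<partial>M)"

definition ptilde_pos :: "real \<Rightarrow> ('a \<Rightarrow> real) \<Rightarrow> ('a \<Rightarrow> real) \<Rightarrow> 'a \<Rightarrow> real" where
  "ptilde_pos \<pi>p pp pn x =
     (\<pi>p * pp x + (1 - \<pi>p)^2 * pn x) / ((1 - \<pi>p)^2 + \<pi>p)"

definition ptilde_neg :: "real \<Rightarrow> ('a \<Rightarrow> real) \<Rightarrow> ('a \<Rightarrow> real) \<Rightarrow> 'a \<Rightarrow> real" where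
  "ptilde_neg \<pi>p pp pn x =
     (\<pi>p^2 * pp x + (1 - \<pi>p) * pn x) / (\<pi>p^2 + (1 - \<pi>p))"

definition R_UU :: "'a measure \<Rightarrow> real \<Rightarrow> (real \<Rightarrow> int \<Rightarrow> real) \<Rightarrow> ('a \<Rightarrow> real)
    \<Rightarrow> ('a \<Rightarrow> real) \<Rightarrow> ('a \<Rightarrow> real) \<Rightarrow> real \<Rightarrow> real \<Rightarrow> real" where
  "R_UU M \<pi>p loss f ptr ptr' \<theta> \<theta>' =
     expect M ptr (\<lambda>x. (1 - \<theta>') * \<pi>p / (\<theta> - \<theta>') * loss (f x) 1
                      - \<theta>' * (1 - \<pi>p) / (\<theta> - \<theta>') * loss (f x) (-1))
   + expect M ptr' (\<lambda>x. \<theta> * (1 - \<pi>p) / (\<theta> - \<theta>') * loss (f x) (-1)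
                      - (1 - \<theta>) * \<pi>p / (\<theta> - \<theta>') * loss (f x) 1)"

definition R_PC :: "'a measure \<Rightarrow> real \<Rightarrow> (real \<Rightarrow> int \<Rightarrow> real) \<Rightarrow> ('a \<Rightarrow> real)
    \<Rightarrow> ('a \<Rightarrow> real) \<Rightarrow> ('a \<Rightarrow> real) \<Rightarrow> real" where
  "R_PC M \<pi>p loss f pp pn =
     expect M (ptilde_pos \<pi>p pp pn) (\<lambda>x. loss (f x) 1 - \<pi>p * loss (f x) (-1))
   + expect M (ptilde_neg \<pi>p pp pn) (\<lambda>x. loss (f x) (-1) - (1 - \<pi>p) * loss (f x) 1)"

end

theory Submission
  imports Defs
begin

theorem corollary1:
  fixes M :: "'a measure" and \<pi>p :: real and pp pn :: "'a \<Rightarrow> real"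
    and loss :: "real \<Rightarrow> int \<Rightarrow> real" and f :: "'a \<Rightarrow> real"
    and ptr ptr' :: "'a \<Rightarrow> real" and \<theta> \<theta>' :: real
  assumes "0 < \<pi>p" and "\<pi>p < 1"
    and "is_density M pp" and "is_density M pn"
    and "\<And>t y. 0 \<le> loss t y"
    and "\<And>y. y \<in> {1, -1} \<Longrightarrow> integrable M (\<lambda>x. pp x * loss (f x) y)"
    and "\<And>y. y \<in> {1, -1} \<Longrightarrow> integrable M (\<lambda>x. pn x * loss (f x) y)"
    and "ptr = ptilde_pos \<pi>p pp pn" and "ptr' = ptilde_neg \<pi>p pp pn"
    and "\<theta> = \<pi>p / (1 - \<pi>p + \<pi>p^2)" and "\<theta>' = \<pi>p^2 / (1 - \<pi>p + \<pi>p^2)"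
  shows "R_UU M \<pi>p loss f ptr ptr' \<theta> \<theta>' = R_PC M \<pi>p loss f pp pn"
proof -
  have D: "1 - \<pi>p + \<pi>p^2 > 0" using assms(1,2)
    by (smt (verit) mult_pos_pos power2_eq_square)
  have D2: "1 - \<pi>p + \<pi>p * \<pi>p \<noteq> 0" using D by (simp add: power2_eq_square)
  have q: "1 - \<pi>p > 0" using assms(2) by simp
  have d: "\<theta> - \<theta>' = \<pi>p * (1 - \<pi>p) / (1 - \<pi>p + \<pi>p^2)"
    using assms(10,11) D by (simp add: field_simps power2_eq_square)
  have nz: "\<pi>p * (1 - \<pi>p) \<noteq> 0" using assms(1) q by simp
  have ne: "\<theta> - \<theta>' \<noteq> 0" using d nz D by simp
  define Dv where "Dv = 1 - \<pi>p + \<pi>p^2"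
  have Dv0: "Dv \<noteq> 0" using D Dv_def by simp
  have t1: "\<theta> = \<pi>p / Dv" "\<theta>' = \<pi>p^2 / Dv" using assms(10,11) Dv_def by simp_all
  have sq: "\<pi>p^2 = Dv - 1 + \<pi>p" using Dv_def by simp
  have e1: "(1 - \<theta>') * \<pi>p = \<theta> - \<theta>'"
    unfolding t1 sq using Dv0 by (simp add: field_simps) (simp add: Dv_def algebra_simps power2_eq_square)
  have e2: "\<theta>' * (1 - \<pi>p) = \<pi>p * (\<theta> - \<theta>')"
    unfolding t1 using Dv0 by (simp add: field_simps power2_eq_square)
  have e3: "\<theta> * (1 - \<pi>p) = \<theta> - \<theta>'"
    unfolding t1 using Dv0 by (simp add: field_simps power2_eq_square)
  have e4: "(1 - \<theta>) * \<pi>p = (1 - \<pi>p) * (\<theta> - \<theta>')"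
    unfolding t1 sq using Dv0 by (simp add: field_simps) (simp add: Dv_def algebra_simps power2_eq_square)
  have c1: "(1 - \<theta>') * \<pi>p / (\<theta> - \<theta>') = 1" using e1 ne by simp
  have c2: "\<theta>' * (1 - \<pi>p) / (\<theta> - \<theta>') = \<pi>p" using e2 ne by simp
  have c3: "\<theta> * (1 - \<pi>p) / (\<theta> - \<theta>') = 1" using e3 ne by simp
  have c4: "(1 - \<theta>) * \<pi>p / (\<theta> - \<theta>') = 1 - \<pi>p" using e4 ne by simp
  show ?thesis unfolding R_UU_def R_PC_def c1 c2 c3 c4 using assms(8,9) by simp
qed

end
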